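(* Let $R\ge 0$ and $0\le m<2^R$ with $n=2^R+m>3$. Let $\mu$ be a partition of $m$ and $\lambda$ a $2^R$-parent of $\mu$, with affected hook-length $h=h^\lambda_\mu$. Then \[ \mathrm{Od}(f^\lambda)=(-1)^{s_2(n)+s_2(h)+\eta^\lambda_\mu}\,\mathrm{Od}(f^\mu). \]
   Context: $f^\lambda$ is the number of standard Young tableaux of shape $\lambda$. For $N\ge1$, $N=2^vo$ with $o$ odd, $\mathrm{Od}(N)=1$ if $o\equiv1\pmod4$ and $-1$ if $o\equiv3\pmod4$. For a partition $\lambda=(\lambda_1\ge\dots\ge\lambda_k>0)$, $H(\lambda):=\{\lambda_i+k-i:1\le i\le k\}$ (first-column hook lengths), $H(\varnothing)=\varnothing$. For a finite $X\subset\mathbb{Z}_{\ge0}$ and $r\ge0$, $X^{+r}:=\{x+r:x\in X\}\cup\{0,1,\dots,r-1\}$. A partition $\lambda$ of $2^R+m$ is a $2^R$-parent of the partition $\mu$ of $m$ ($m<2^R$) if $\mu$ is the $2^R$-core of $\lambda$, i.e. $\mu$ is obtained from $\lambda$ by removing a rim hook of length $2^R$; equivalently, there is an $h\in H(\lambda)$ with $h\ge 2^R$, $h-2^R\notin H(\lambda)$ and $(H(\lambda)\cup\{h-2^R\})\setminus\{h\}=H(\mu)^{+r}$ for some $r\ge0$. This $h$ is unique and is called the affected hook-length $h^\lambda_\mu$. For $N$ with binary expansion $b_k\dots b_0$ ($b_k=1$, $k\ge1$), $s_2(N):=b_k+b_{k-1}$. Finally $\eta^\lambda_\mu\in\mathbb{Z}/2\mathbb{Z}$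 is defined by $(-1)^{\eta^\lambda_\mu}=\prod_{x\in H(\lambda),\,x\ne h}\frac{\mathrm{Od}(|h-x|)}{\mathrm{Od}(|h-2^R-x|)}$ with $h=h^\lambda_\mu$. *)

theory Defs
  imports Complex_Main "HOL-Computational_Algebra.Primes"
begin

definition is_partition :: "nat list \<Rightarrow> bool" where
  "is_partition lam \<longleftrightarrow> sorted_wrt (\<ge>) lam \<and> (\<forall>x\<in>set lam. x > 0)"

definition partition_of :: "nat list \<Rightarrow> nat \<Rightarrow> bool" where
  "partition_of lam n \<longleftrightarrow> is_partition lam \<and> sum_list lam = n"

(* cells of the Young diagram, 0-indexed (row, column) *)
definition cells :: "nat list \<Rightarrow> (nat \<times> nat) set" where
  "cells lam = {(i, j). i < length lam \<and> j < lam ! i}"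

definition SYT :: "nat list \<Rightarrow> ((nat \<times> nat) \<Rightarrow> nat) set" where
  "SYT lam = {T. bij_betw T (cells lam) {1..sum_list lam}
      \<and> (\<forall>c. c \<notin> cells lam \<longrightarrow> T c = 0)
      \<and> (\<forall>i j. (i, j + 1) \<in> cells lam \<longrightarrow> T (i, j) < T (i, j + 1))
      \<and> (\<forall>i j. (i + 1, j) \<in> cells lam \<longrightarrow> T (i, j) < T (i + 1, j))}"

definition num_SYT :: "nat list \<Rightarrow> nat" where
  "num_SYT lam = card (SYT lam)"

definition Od :: "nat \<Rightarrow> int" where
  "Od N = (if (N div 2 ^ multiplicity (2::nat) (N::nat)) mod 4 = 1 then 1 else -1)"

(* first-column hook lengths H(lambda) = {lambda_i + k - i : 1 <= i <= k} *)
definition H :: "nat list \<Rightarrow> nat set" where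
  "H lam = {lam ! i + length lam - (i + 1) | i. i < length lam}"

definition shiftset :: "nat set \<Rightarrow> nat \<Rightarrow> nat set" where
  "shiftset X r = (\<lambda>x. x + r) ` X \<union> {0..<r}"

definition affected_hook :: "nat \<Rightarrow> nat list \<Rightarrow> nat list \<Rightarrow> nat \<Rightarrow> bool" where
  "affected_hook R lam mu h \<longleftrightarrow> h \<in> H lam \<and> h \<ge> 2 ^ R \<and> h - 2 ^ R \<notin> H lam
     \<and> (\<exists>r. (H lam \<union> {h - 2 ^ R}) - {h} = shiftset (H mu) r)"

definition is_parent :: "nat \<Rightarrow> nat list \<Rightarrow> nat list \<Rightarrow> bool" where
  "is_parent R lam mu \<longleftrightarrow> sum_list mu < 2 ^ R \<and> partition_of mu (sum_list mu)
     \<and> partition_of lam (2 ^ R + sum_list mu) \<and> (\<exists>h. affected_hook R lam mu h)"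

(* s_2(N) = b_k + b_{k-1}, where b_k is the leading binary digit of N (N >= 2) *)
definition s2 :: "nat \<Rightarrow> nat" where
  "s2 N = (let k = (GREATEST k. 2 ^ k \<le> N) in
           (N div 2 ^ k) mod 2 + (N div 2 ^ (k - 1)) mod 2)"

definition eta_sign :: "nat \<Rightarrow> nat list \<Rightarrow> nat \<Rightarrow> real" where
  "eta_sign R lam h = (\<Prod>x\<in>H lam - {h}.
      of_int (Od (nat \<bar>int h - int x\<bar>)) / of_int (Od (nat \<bar>int h - 2 ^ R - int x\<bar>)))"

end

theory Submission
  imports Defs
begin


lemma alg1:
  fixes u v w d :: real
  assumes "u \<noteq> v" "w \<noteq> u" "w \<noteq> v"
  shows "(w-1-v)/(w-v)*(d/(w-u)) = d*((u-1-v)/(u-v))/(w-u) - d/(v-u)/(w-v)"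
proof -
  obtain p q where p: "u = v + p" "p \<noteq> 0" and q: "w = v + q" "q \<noteq> 0" "q \<noteq> p"
    using assms by (metis add_diff_cancel_left' diff_add_cancel eq_iff_diff_eq_0)
  have "q - p \<noteq> 0" using q by auto
  then show ?thesis using p q by (simp add: field_simps)
qed
lemma alg2:
  fixes u v :: real
  assumes "u \<noteq> v"
  shows "(u-1-v)/(u-v) - 1/(v-u) = 1"
proof -
  obtain p where p: "u = v + p" "p \<noteq> 0"
    using assms by (metis add_diff_cancel_left' diff_add_cancel eq_iff_diff_eq_0)
  then show ?thesis by (simp add: field_simps)
qed
lemma alg3:
  fixes u v d :: real
  assumes "u \<noteq> v"
  shows "u * (d*((u-1-v)/(u-v))) - v*(d/(v-u)) = u*d - d"
proof -
  obtain p where p: "u = v + p" "p \<noteq> 0"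
    using assms by (metis add_diff_cancel_left' diff_add_cancel eq_iff_diff_eq_0)
  then show ?thesis by (simp add: field_simps)
qed


definition dd :: "nat set \<Rightarrow> nat \<Rightarrow> real" where
  "dd X x = (\<Prod>y\<in>X-{x}. (real x - 1 - real y)/(real x - real y))"

lemma dd_insert:
  assumes "finite X" "a \<notin> X" "x \<in> X"
  shows "dd (insert a X) x = dd X x * ((real x - 1 - real a)/(real x - real a))"
proof -
  have "insert a X - {x} = insert a (X - {x})" using assms by auto
  then show ?thesis unfolding dd_def using assms by (simp add: mult.commute)
qed

lemma dd_insert_self:
  assumes "a \<notin> X"
  shows "dd (insert a X) a = (\<Prod>y\<in>X. (real a - 1 - real y)/(real a - real y))"
proof -
  have "insert a X - {a} = X" using assms by auto
  then show ?thesis unfolding dd_def by simp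
qed

lemma pf:
  "finite X \<Longrightarrow> z \<notin> real ` X \<Longrightarrow>
   (\<Prod>y\<in>X. (z - 1 - real y)/(z - real y)) = 1 - (\<Sum>x\<in>X. dd X x/(z - real x))"
proof (induction X arbitrary: z rule: finite_induct)
  case empty show ?case by simp
next
  case (insert a X)
  have za: "z \<noteq> real a" and zX: "z \<notin> real ` X" using insert.prems by auto
  have IHa: "dd (insert a X) a = 1 - (\<Sum>x\<in>X. dd X x/(real a - real x))"
    proof -
    have "real a \<notin> real ` X" using insert.hyps by auto
    then show ?thesis using insert.IH[of "real a"] insert.hyps dd_insert_self[of a X] by auto
  qed
  have "(\<Prod>y\<in>insert a X. (z - 1 - real y)/(z - real y))
      = (z - 1 - real a)/(z - real a) * (1 - (\<Sum>x\<in>X. dd X x/(z - real x)))"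
    using insert.hyps insert.IH[OF zX] by simp
  also have "\<dots> = 1 - 1/(z - real a) - (\<Sum>x\<in>X. (z - 1 - real a)/(z - real a) * (dd X x/(z - real x)))"
  proof -
    have "(z - 1 - real a)/(z - real a) = 1 - 1/(z - real a)" using za by (simp add: field_simps)
    then show ?thesis by (simp add: right_diff_distrib sum_distrib_left)
  qed
  also have "(\<Sum>x\<in>X. (z - 1 - real a)/(z - real a) * (dd X x/(z - real x)))
     = (\<Sum>x\<in>X. dd (insert a X) x/(z - real x) - dd X x/(real a - real x)/(z - real a))"
  proof (rule sum.cong[OF refl])
    fix x assume x: "x \<in> X"
    then have xa: "real x \<noteq> real a" using insert.hyps by auto
    have zx: "z \<noteq> real x" using zX x by auto
    show "(z - 1 - real a)/(z - real a) * (dd X x/(z - real x))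
       = dd (insert a X) x/(z - real x) - dd X x/(real a - real x)/(z - real a)"
      unfolding dd_insert[OF insert.hyps(1,2) x]
      using alg1[of "real x" "real a" z "dd X x"] xa zx za by simp
  qed
  also have "1 - 1/(z - real a) - (\<Sum>x\<in>X. dd (insert a X) x/(z - real x) - dd X x/(real a - real x)/(z - real a))
     = 1 - ((\<Sum>x\<in>X. dd (insert a X) x/(z - real x)) + dd (insert a X) a/(z - real a))"
  proof -
    have "(\<Sum>x\<in>X. dd X x/(real a - real x)/(z - real a)) = (\<Sum>x\<in>X. dd X x/(real a - real x))/(z - real a)"
      by (simp add: sum_divide_distrib)
    then show ?thesis unfolding IHa sum_subtractf by (simp add: diff_divide_distrib)
  qed
  also have "\<dots> = 1 - (\<Sum>x\<in>insert a X. dd (insert a X) x/(z - real x))"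
    using insert.hyps by simp
  finally show ?case .
qed

lemma s1_formula:
  "finite X \<Longrightarrow> (\<Sum>x\<in>X. real x * dd X x) = (\<Sum>x\<in>X. real x) - real (card X) * (real (card X) - 1)/2
     \<and> (\<Sum>x\<in>X. dd X x) = real (card X)"
proof (induction X rule: finite_induct)
  case empty show ?case by simp
next
  case (insert a X)
  have IHa: "dd (insert a X) a = 1 - (\<Sum>x\<in>X. dd X x/(real a - real x))"
    proof -
    have "real a \<notin> real ` X" using insert.hyps by auto
    then show ?thesis using pf[OF insert.hyps(1), of "real a"] insert.hyps dd_insert_self[of a X] by auto
  qed
  have s0: "(\<Sum>x\<in>insert a X. dd (insert a X) x) = (\<Sum>x\<in>X. dd X x) + 1"
  proof -
    have "(\<Sum>x\<in>insert a X. dd (insert a X) x) = (\<Sum>x\<in>X. dd (insert a X) x) + dd (insert a X) a"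
      using insert.hyps by simp
    also have "\<dots> = (\<Sum>x\<in>X. dd (insert a X) x - dd X x/(real a - real x)) + 1"
      unfolding IHa sum_subtractf by simp
    also have "(\<Sum>x\<in>X. dd (insert a X) x - dd X x/(real a - real x)) = (\<Sum>x\<in>X. dd X x)"
    proof (rule sum.cong[OF refl])
      fix x assume x: "x \<in> X"
      then have xa: "real x \<noteq> real a" using insert.hyps by auto
      show "dd (insert a X) x - dd X x/(real a - real x) = dd X x"
      proof -
        have "(real x - 1 - real a)/(real x - real a) - 1/(real a - real x) = 1"
          using alg2 xa by simp
        then have "dd X x * ((real x - 1 - real a)/(real x - real a) - 1/(real a - real x)) = dd X x" by simp
        then show ?thesis unfolding dd_insert[OF insert.hyps(1,2) x] by (simp add: right_diff_distrib)
      qed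
    qed
    finally show ?thesis .
  qed
  have s1: "(\<Sum>x\<in>insert a X. real x * dd (insert a X) x) = (\<Sum>x\<in>X. real x * dd X x) - (\<Sum>x\<in>X. dd X x) + real a"
  proof -
    have "(\<Sum>x\<in>insert a X. real x * dd (insert a X) x) = (\<Sum>x\<in>X. real x * dd (insert a X) x) + real a * dd (insert a X) a"
      using insert.hyps by simp
    also have "\<dots> = (\<Sum>x\<in>X. real x * dd (insert a X) x - real a * (dd X x/(real a - real x))) + real a"
      unfolding IHa sum_subtractf by (simp add: sum_distrib_left algebra_simps)
    also have "(\<Sum>x\<in>X. real x * dd (insert a X) x - real a * (dd X x/(real a - real x))) = (\<Sum>x\<in>X. real x * dd X x - dd X x)"
    proof (rule sum.cong[OF refl])
      fix x assume x: "x \<in> X"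
      then have xa: "real x \<noteq> real a" using insert.hyps by auto
      show "real x * dd (insert a X) x - real a * (dd X x/(real a - real x)) = real x * dd X x - dd X x"
        unfolding dd_insert[OF insert.hyps(1,2) x] using alg3[of "real x" "real a" "dd X x"] xa by simp
    qed
    finally show ?thesis by (simp add: sum_subtractf)
  qed
  have k: "card (insert a X) = card X + 1" using insert.hyps by simp
  have sm: "(\<Sum>x\<in>insert a X. real x) = real a + (\<Sum>x\<in>X. real x)" using insert.hyps by simp
  have ar: "real (card X + 1) * (real (card X + 1) - 1)/2 = real (card X) * (real (card X) - 1)/2 + real (card X)"
    by (simp add: field_simps)
  show ?case unfolding k sm ar using s0 s1 insert.IH k by simp

qed



definition Dl :: "nat set \<Rightarrow> real" where
  "Dl X = (\<Prod>x\<in>X. \<Prod>y\<in>{y\<in>X. y < x}. real (x - y))"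

lemma Dl_insert:
  assumes "finite Y" "a \<notin> Y"
  shows "Dl (insert a Y) = Dl Y * (\<Prod>y\<in>Y. \<bar>real a - real y\<bar>)"
proof -
  have e1: "{y\<in>insert a Y. y < a} = {y\<in>Y. y < a}" by auto
  have e2: "\<And>x. x \<in> Y \<Longrightarrow> (\<Prod>y\<in>{y\<in>insert a Y. y < x}. real (x - y))
      = (if a < x then real (x - a) else 1) * (\<Prod>y\<in>{y\<in>Y. y < x}. real (x - y))"
  proof -
    fix x assume x: "x \<in> Y"
    show "(\<Prod>y\<in>{y\<in>insert a Y. y < x}. real (x - y))
      = (if a < x then real (x - a) else 1) * (\<Prod>y\<in>{y\<in>Y. y < x}. real (x - y))"
    proof (cases "a < x")
      case True
      then have "{y\<in>insert a Y. y < x} = insert a {y\<in>Y. y < x}" by auto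
      then show ?thesis using True assms by simp
    next
      case False
      then have "{y\<in>insert a Y. y < x} = {y\<in>Y. y < x}" by auto
      then show ?thesis using False by simp
    qed
  qed
  have "Dl (insert a Y) = (\<Prod>y\<in>{y\<in>Y. y < a}. real (a - y)) *
      (\<Prod>x\<in>Y. (if a < x then real (x - a) else 1) * (\<Prod>y\<in>{y\<in>Y. y < x}. real (x - y)))"
    unfolding Dl_def using assms e1 e2 by (simp add: prod.insert)
  also have "\<dots> = Dl Y * ((\<Prod>y\<in>Y. if y < a then real (a - y) else 1) * (\<Prod>x\<in>Y. if a < x then real (x - a) else 1))"
    unfolding Dl_def prod.distrib prod.inter_filter[OF assms(1)] by (simp add: ac_simps)
  also have "(\<Prod>y\<in>Y. if y < a then real (a - y) else 1) * (\<Prod>x\<in>Y. if a < x then real (x - a) else 1)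
      = (\<Prod>y\<in>Y. \<bar>real a - real y\<bar>)"
    unfolding prod.distrib[symmetric]
  proof (rule prod.cong[OF refl])
    fix y assume "y \<in> Y"
    then have "y \<noteq> a" using assms by auto
    then show "(if y < a then real (a - y) else 1) * (if a < y then real (y - a) else 1) = \<bar>real a - real y\<bar>"
      by (cases "y < a") (auto simp: of_nat_diff)
  qed
  finally show ?thesis .
qed

lemma Dl_pos: "finite X \<Longrightarrow> Dl X > 0"
  unfolding Dl_def by (intro prod_pos) auto

lemma Dl_lessThan: "Dl {..<k} = (\<Prod>x<k. fact x)"
proof (induction k)
  case 0 then show ?case by (simp add: Dl_def)
next
  case (Suc k)
  have "Dl {..<Suc k} = Dl {..<k} * (\<Prod>y<k. \<bar>real k - real y\<bar>)"
    using Dl_insert[of "{..<k}" k] by (simp add: lessThan_Suc)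
  also have "(\<Prod>y<k. \<bar>real k - real y\<bar>) = fact k"
    unfolding fact_prod_rev[of k] by (simp add: atLeast0LessThan of_nat_diff)
  finally show ?case using Suc by simp
qed

lemma ratio:
  assumes X: "finite X" and x: "x \<in> X" "1 \<le> x" "x - 1 \<notin> X"
  shows "Dl (insert (x - 1) (X - {x})) * (\<Prod>y\<in>X. fact y)
       = real x * dd X x * Dl X * (\<Prod>y\<in>insert (x - 1) (X - {x}). fact y)"
proof -
  let ?Y = "X - {x}"
  have fY: "finite ?Y" using X by simp
  have xY: "x \<notin> ?Y" "x - 1 \<notin> ?Y" using x by auto
  have XY: "X = insert x ?Y" using x by auto
  have D1: "Dl X = Dl ?Y * (\<Prod>y\<in>?Y. \<bar>real x - real y\<bar>)"
    using Dl_insert[OF fY xY(1)] XY by simp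
  have D2: "Dl (insert (x - 1) ?Y) = Dl ?Y * (\<Prod>y\<in>?Y. \<bar>real (x - 1) - real y\<bar>)"
    using Dl_insert[OF fY xY(2)] .
  have P: "(\<Prod>y\<in>?Y. \<bar>real (x - 1) - real y\<bar>) = (\<Prod>y\<in>?Y. \<bar>real x - real y\<bar>) * dd X x"
    unfolding dd_def prod.distrib[symmetric]
  proof (rule prod.cong[OF refl])
    fix y assume y: "y \<in> ?Y"
    then have "y \<noteq> x" "y \<noteq> x - 1" using x by auto
    then show "\<bar>real (x - 1) - real y\<bar> = \<bar>real x - real y\<bar> * ((real x - 1 - real y) / (real x - real y))"
      using x(2) by (cases "y < x") (auto simp: of_nat_diff field_simps)
  qed
  have F1: "(\<Prod>y\<in>X. fact y) = fact x * (\<Prod>y\<in>?Y. fact y)"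
    using XY fY xY by (metis prod.insert)
  have F2: "(\<Prod>y\<in>insert (x - 1) ?Y. fact y) = fact (x - 1) * (\<Prod>y\<in>?Y. fact y)"
    using fY xY by simp
  have fx: "(fact x :: real) = real x * fact (x - 1)"
    using x(2) by (metis Suc_diff_1 fact_Suc less_le_trans zero_less_one of_nat_fact)
  show ?thesis unfolding D1 D2 P F1 F2 fx by (simp add: ac_simps)
qed

lemma dd_zero:
  assumes "finite X" "x \<in> X" "1 \<le> x" "x - 1 \<in> X"
  shows "dd X x = 0"
  unfolding dd_def
  apply (rule prod_zero)
  using assms by (auto intro!: bexI[of _ "x - 1"] simp: of_nat_diff)




definition corner :: "nat list \<Rightarrow> nat \<Rightarrow> bool" where
  "corner lam i \<longleftrightarrow> i < length lam \<and> 0 < lam ! i \<and> (Suc i = length lam \<or> lam ! Suc i < lam ! i)"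

definition rm :: "nat list \<Rightarrow> nat \<Rightarrow> nat list" where
  "rm lam i = lam[i := lam ! i - 1]"


lemma wdec_nth: "lam ! j \<le> lam ! i" if "sorted_wrt (\<ge>) lam" "i \<le> j" "j < length lam" for lam :: "nat list"
proof (cases "i = j")
  case True then show ?thesis by simp
next
  case False then show ?thesis using that by (auto simp: sorted_wrt_iff_nth_less)
qed


lemma cells_Sigma: "cells lam = (SIGMA i:{..<length lam}. {..<lam ! i})"
  unfolding cells_def by auto


lemma finite_cells: "finite (cells lam)"
  unfolding cells_Sigma by auto


lemma card_cells: "card (cells lam) = sum_list lam"
  unfolding cells_Sigma by (simp add: sum_list_sum_nth atLeast0LessThan)


lemma finite_SYT: "finite (SYT lam)"
proof -
  have "SYT lam \<subseteq> {f. \<forall>x. (x \<in> cells lam \<longrightarrow> f x \<in> {1..sum_list lam}) \<and> (x \<notin> cells lam \<longrightarrow> f x = 0)}"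
    unfolding SYT_def bij_betw_def by auto
  moreover have "finite {f. \<forall>x. (x \<in> cells lam \<longrightarrow> f x \<in> {1..sum_list lam}) \<and> (x \<notin> cells lam \<longrightarrow> f x = (0::nat))}"
    by (rule finite_set_of_finite_funs) (auto simp: finite_cells)
  ultimately show ?thesis by (rule finite_subset)
qed


lemma rm_len[simp]: "length (rm lam i) = length lam"
  unfolding rm_def by simp


lemma rm_nth: "rm lam i ! a = (if a = i \<and> i < length lam then lam ! i - 1 else lam ! a)"
  unfolding rm_def by (auto simp: list_update_beyond)


lemma cells_rm:
  assumes "corner lam i"
  shows "cells (rm lam i) = cells lam - {(i, lam ! i - 1)}"
  using assms unfolding cells_def corner_def by (auto simp: rm_nth split: if_splits)


lemma sum_rm:
  assumes "corner lam i"
  shows "sum_list (rm lam i) = sum_list lam - 1"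
  using assms unfolding corner_def rm_def by (simp add: sum_list_update)


lemma wdec_rm:
  assumes "sorted_wrt (\<ge>) lam" "corner lam i"
  shows "sorted_wrt (\<ge>) (rm lam i)"
  unfolding sorted_wrt_iff_nth_less
proof (intro allI impI)
  fix a b assume ab: "a < b" "b < length (rm lam i)"
  have le: "lam ! b \<le> lam ! a" using wdec_nth[OF assms(1), of a b] ab by simp
  show "rm lam i ! b \<le> rm lam i ! a"
  proof (cases "b = i")
    case True then show ?thesis using le ab by (auto simp: rm_nth)
  next
    case False
    show ?thesis
    proof (cases "a = i")
      case True
      then have "lam ! b \<le> lam ! Suc i" using wdec_nth[OF assms(1), of "Suc i" b] ab by simp
      moreover have "Suc i < length lam" using ab True by simp
      ultimately show ?thesis using assms(2) True False ab unfolding corner_def by (auto simp: rm_nth)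
    next
      case False
      then show ?thesis using le \<open>b \<noteq> i\<close> by (auto simp: rm_nth)
    qed
  qed
qed


lemma SYT_max_corner:
  assumes T: "T \<in> SYT lam" and n: "sum_list lam = n" "n \<ge> 1" and w: "sorted_wrt (\<ge>) lam"
  shows "\<exists>i. corner lam i \<and> T (i, lam ! i - 1) = n"
proof -
  have bij: "bij_betw T (cells lam) {1..n}" using T n unfolding SYT_def by auto
  then obtain c where c: "c \<in> cells lam" "T c = n" using n
    by (metis atLeastAtMost_iff bij_betw_iff_bijections order_refl)
  obtain i j where ij: "c = (i, j)" by force
  have ilt: "i < length lam" "j < lam ! i" using c ij unfolding cells_def by auto
  have vals: "\<And>d. d \<in> cells lam \<Longrightarrow> T d \<le> n" using bij unfolding bij_betw_def by auto
  have j: "j = lam ! i - 1"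
  proof (rule ccontr)
    assume "j \<noteq> lam ! i - 1"
    then have "(i, j + 1) \<in> cells lam" using ilt unfolding cells_def by auto
    then have "T (i, j) < T (i, j + 1)" "T (i, j + 1) \<le> n" using T vals unfolding SYT_def by auto
    then show False using c ij by simp
  qed
  have "Suc i = length lam \<or> lam ! Suc i < lam ! i"
  proof (rule ccontr)
    assume "\<not> (Suc i = length lam \<or> lam ! Suc i < lam ! i)"
    then have "Suc i < length lam" "lam ! i \<le> lam ! Suc i" using ilt by auto
    then have "(i + 1, j) \<in> cells lam" using ilt unfolding cells_def by auto
    then have "T (i, j) < T (i + 1, j)" "T (i + 1, j) \<le> n" using T vals unfolding SYT_def by auto
    then show False using c ij by simp
  qed
  then have "corner lam i" using ilt unfolding corner_def by auto
  then show ?thesis using c ij j by auto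
qed


lemma SYT_remove:
  assumes T: "T \<in> SYT lam" and n: "sum_list lam = n" and ci: "corner lam i"
    and Tc: "T (i, lam ! i - 1) = n"
  shows "T((i, lam ! i - 1) := 0) \<in> SYT (rm lam i)"
proof -
  let ?c = "(i, lam ! i - 1)"
  have cc: "?c \<in> cells lam" using ci unfolding corner_def cells_def by auto
  have bij: "bij_betw T (cells lam) {1..n}" using T n unfolding SYT_def by auto
  have inj: "inj_on T (cells lam)" and im: "T ` cells lam = {1..n}" using bij unfolding bij_betw_def by auto
  have "T ` (cells lam - {?c}) = {1..n} - {n}"
    using inj_on_image_set_diff[OF inj, of "cells lam" "{?c}"] im cc Tc by auto
  also have "{1..n} - {n} = {1..sum_list (rm lam i)}" using sum_rm[OF ci] n by auto
  finally have "bij_betw T (cells (rm lam i)) {1..sum_list (rm lam i)}"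
    unfolding cells_rm[OF ci] bij_betw_def using inj_on_subset[OF inj] by auto
  then have b: "bij_betw (T(?c := 0)) (cells (rm lam i)) {1..sum_list (rm lam i)}"
    by (rule bij_betw_cong[THEN iffD1, rotated]) (auto simp: cells_rm[OF ci])
  have z: "\<forall>d. d \<notin> cells (rm lam i) \<longrightarrow> (T(?c := 0)) d = 0"
    using T unfolding SYT_def cells_rm[OF ci] by auto
  have r: "\<forall>a b. (a, b + 1) \<in> cells (rm lam i) \<longrightarrow> (T(?c := 0)) (a, b) < (T(?c := 0)) (a, b + 1)"
  proof (intro allI impI)
    fix a b assume ab: "(a, b + 1) \<in> cells (rm lam i)"
    then have "(a, b) \<in> cells (rm lam i)" unfolding cells_def by auto
    then show "(T(?c := 0)) (a, b) < (T(?c := 0)) (a, b + 1)"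
      using ab T unfolding cells_rm[OF ci] SYT_def by auto
  qed
  have col: "\<forall>a b. (a + 1, b) \<in> cells (rm lam i) \<longrightarrow> (T(?c := 0)) (a, b) < (T(?c := 0)) (a + 1, b)"
  proof (intro allI impI)
    fix a b assume ab: "(a + 1, b) \<in> cells (rm lam i)"
    then have ab': "(a + 1, b) \<in> cells lam" "(a + 1, b) \<noteq> ?c" unfolding cells_rm[OF ci] by auto
    have ne: "(a, b) \<noteq> ?c"
    proof
      assume "(a, b) = ?c"
      then have "a = i" "b = lam ! i - 1" by auto
      then show False using ab'(1) ci unfolding corner_def cells_def by auto
    qed
    show "(T(?c := 0)) (a, b) < (T(?c := 0)) (a + 1, b)"
      using ab' ne T unfolding SYT_def by auto
  qed
  show ?thesis unfolding SYT_def using b z r col by blast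
qed


lemma SYT_add:
  assumes S: "S \<in> SYT (rm lam i)" and n: "sum_list lam = n" and ci: "corner lam i"
    and w: "sorted_wrt (\<ge>) lam"
  shows "S((i, lam ! i - 1) := n) \<in> SYT lam"
proof -
  let ?c = "(i, lam ! i - 1)"
  have cc: "?c \<in> cells lam" using ci unfolding corner_def cells_def by auto
  have n1: "n \<ge> 1" using ci n unfolding corner_def
    by (metis One_nat_def Suc_leI cc card_cells card_gt_0_iff emptyE finite_cells)
  have sr: "sum_list (rm lam i) = n - 1" using sum_rm[OF ci] n by simp
  have bij: "bij_betw S (cells lam - {?c}) {1..n-1}" using S sr cells_rm[OF ci] unfolding SYT_def by auto
  have Sc: "S ?c = 0" using S cells_rm[OF ci] unfolding SYT_def by auto
  have vals: "\<And>d. d \<in> cells lam - {?c} \<Longrightarrow> S d \<le> n - 1" using bij unfolding bij_betw_def by auto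
  have ins: "cells lam = insert ?c (cells lam - {?c})" using cc by auto
  have b: "bij_betw (S(?c := n)) (cells lam) {1..n}"
  proof -
    have b1: "bij_betw (S(?c := n)) (cells lam - {?c}) {1..n-1}"
      using bij by (rule bij_betw_cong[THEN iffD1, rotated]) auto
    have "inj_on (S(?c := n)) (insert ?c (cells lam - {?c}))"
    proof -
      have "cells lam - {?c} - {?c} = cells lam - {?c}" by auto
      then show ?thesis unfolding inj_on_insert using b1 n1 unfolding bij_betw_def by auto
    qed
    then have "inj_on (S(?c := n)) (cells lam)" using ins by simp
    moreover have "(S(?c := n)) ` cells lam = {1..n}"
    proof -
      have "(S(?c := n)) ` cells lam = insert n ((S(?c := n)) ` (cells lam - {?c}))"
        by (subst ins, subst image_insert) (simp only: fun_upd_same)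
      also have "\<dots> = insert n {1..n-1}" using b1 unfolding bij_betw_def by simp
      also have "\<dots> = {1..n}" using n1 by auto
      finally show ?thesis .
    qed
    ultimately show ?thesis unfolding bij_betw_def by simp
  qed
  have z: "\<forall>d. d \<notin> cells lam \<longrightarrow> (S(?c := n)) d = 0"
    using S cc unfolding SYT_def cells_rm[OF ci] by auto
  have r: "\<forall>a b. (a, b + 1) \<in> cells lam \<longrightarrow> (S(?c := n)) (a, b) < (S(?c := n)) (a, b + 1)"
  proof (intro allI impI)
    fix a b assume ab: "(a, b + 1) \<in> cells lam"
    have abc: "(a, b) \<in> cells lam" using ab unfolding cells_def by auto
    show "(S(?c := n)) (a, b) < (S(?c := n)) (a, b + 1)"
    proof (cases "(a, b + 1) = ?c")
      case True
      then have "(a, b) \<in> cells lam - {?c}" using abc by auto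
      then show ?thesis using vals[of "(a,b)"] True n1 by auto
    next
      case False
      have "(a, b) \<noteq> ?c"
      proof
        assume "(a, b) = ?c" then show False using ab unfolding cells_def by auto
      qed
      then show ?thesis using False S ab unfolding SYT_def cells_rm[OF ci] by auto
    qed
  qed
  have col: "\<forall>a b. (a + 1, b) \<in> cells lam \<longrightarrow> (S(?c := n)) (a, b) < (S(?c := n)) (a + 1, b)"
  proof (intro allI impI)
    fix a b assume ab: "(a + 1, b) \<in> cells lam"
    have abc: "(a, b) \<in> cells lam" using ab wdec_nth[OF w, of a "a+1"] unfolding cells_def by auto
    show "(S(?c := n)) (a, b) < (S(?c := n)) (a + 1, b)"
    proof (cases "(a + 1, b) = ?c")
      case True
      then have "(a, b) \<in> cells lam - {?c}" using abc by auto
      then show ?thesis using vals[of "(a,b)"] True n1 by auto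
    next
      case False
      have "(a, b) \<noteq> ?c"
      proof
        assume "(a, b) = ?c"
        then have "a = i" "b = lam ! i - 1" by auto
        then show False using ab ci unfolding corner_def cells_def by auto
      qed
      then show ?thesis using False S ab unfolding SYT_def cells_rm[OF ci] by auto
    qed
  qed
  show ?thesis unfolding SYT_def using b z r col n by blast
qed


lemma card_A:
  assumes n: "sum_list lam = n" and ci: "corner lam i" and w: "sorted_wrt (\<ge>) lam"
  shows "card {T \<in> SYT lam. T (i, lam ! i - 1) = n} = num_SYT (rm lam i)"
proof -
  let ?c = "(i, lam ! i - 1)"
  have "bij_betw (\<lambda>T. T(?c := 0)) {T \<in> SYT lam. T ?c = n} (SYT (rm lam i))"
  proof (rule bij_betw_byWitness[where f' = "\<lambda>S. S(?c := n)"])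
    show "\<forall>a\<in>{T \<in> SYT lam. T ?c = n}. (a(?c := 0))(?c := n) = a" by auto
    show "\<forall>a'\<in>SYT (rm lam i). (a'(?c := n))(?c := 0) = a'"
    proof
      fix S assume "S \<in> SYT (rm lam i)"
      then have "S ?c = 0" using cells_rm[OF ci] unfolding SYT_def by auto
      then show "(S(?c := n))(?c := 0) = S" by auto
    qed
    show "(\<lambda>T. T(?c := 0)) ` {T \<in> SYT lam. T ?c = n} \<subseteq> SYT (rm lam i)"
      using SYT_remove[OF _ n ci] by auto
    show "(\<lambda>S. S(?c := n)) ` SYT (rm lam i) \<subseteq> {T \<in> SYT lam. T ?c = n}"
      using SYT_add[OF _ n ci w] by auto
  qed
  then show ?thesis unfolding num_SYT_def by (rule bij_betw_same_card)
qed


lemma branching: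
  assumes w: "sorted_wrt (\<ge>) lam" and n: "sum_list lam = n" "n \<ge> 1"
  shows "num_SYT lam = (\<Sum>i<length lam. if corner lam i then num_SYT (rm lam i) else 0)"
proof -
  let ?C = "{i\<in>{..<length lam}. corner lam i}"
  let ?A = "\<lambda>i. {T \<in> SYT lam. T (i, lam ! i - 1) = n}"
  have U: "SYT lam = (\<Union>i\<in>?C. ?A i)"
  proof
    show "SYT lam \<subseteq> (\<Union>i\<in>?C. ?A i)"
    proof
      fix T assume T: "T \<in> SYT lam"
      obtain i where "corner lam i" "T (i, lam ! i - 1) = n" using SYT_max_corner[OF T n w] by auto
      then show "T \<in> (\<Union>i\<in>?C. ?A i)" using T unfolding corner_def by auto
    qed
  qed auto
  have disj: "\<forall>i\<in>?C. \<forall>j\<in>?C. i \<noteq> j \<longrightarrow> ?A i \<inter> ?A j = {}"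
  proof (intro ballI impI)
    fix i j assume ij: "i \<in> ?C" "j \<in> ?C" "i \<noteq> j"
    show "?A i \<inter> ?A j = {}"
    proof (rule ccontr)
      assume "?A i \<inter> ?A j \<noteq> {}"
      then obtain T where T: "T \<in> SYT lam" "T (i, lam ! i - 1) = n" "T (j, lam ! j - 1) = n" by auto
      have "inj_on T (cells lam)" using T unfolding SYT_def bij_betw_def by auto
      moreover have "(i, lam ! i - 1) \<in> cells lam" "(j, lam ! j - 1) \<in> cells lam"
        using ij unfolding corner_def cells_def by auto
      ultimately show False using T ij(3) unfolding inj_on_def by auto
    qed
  qed
  have "num_SYT lam = card (\<Union>i\<in>?C. ?A i)"
    unfolding num_SYT_def by (rule arg_cong[where f=card, OF U])
  also have "\<dots> = (\<Sum>i\<in>?C. card (?A i))"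
    by (rule card_UN_disjoint) (use disj finite_SYT in auto)
  also have "\<dots> = (\<Sum>i\<in>?C. num_SYT (rm lam i))"
    by (rule sum.cong[OF refl]) (use card_A[OF n(1) _ w] in auto)
  also have "\<dots> = (\<Sum>i<length lam. if corner lam i then num_SYT (rm lam i) else 0)"
    using sum.inter_filter[of "{..<length lam}" "\<lambda>i. num_SYT (rm lam i)" "corner lam"] by simp
  finally show ?thesis .
qed




definition beta :: "nat list \<Rightarrow> nat \<Rightarrow> nat" where
  "beta lam i = lam ! i + length lam - (i + 1)"

lemma H_beta: "H lam = beta lam ` {..<length lam}"
  unfolding H_def beta_def by auto

lemma beta_strict:
  assumes w: "sorted_wrt (\<ge>) lam" and ij: "i < j" "j < length lam"
  shows "beta lam j < beta lam i"
  using wdec_nth[OF w, of i j] ij unfolding beta_def by auto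

lemma beta_inj:
  assumes w: "sorted_wrt (\<ge>) lam"
  shows "inj_on (beta lam) {..<length lam}"
proof (rule inj_onI)
  fix i j assume ij: "i \<in> {..<length lam}" "j \<in> {..<length lam}" "beta lam i = beta lam j"
  show "i = j"
  proof (rule ccontr)
    assume "i \<noteq> j"
    then have "i < j \<or> j < i" by auto
    then show False using beta_strict[OF w] ij by (metis lessThan_iff less_irrefl)
  qed
qed

lemma finite_H: "finite (H lam)" unfolding H_beta by simp

lemma card_H: "sorted_wrt (\<ge>) lam \<Longrightarrow> card (H lam) = length lam"
  unfolding H_beta by (simp add: card_image beta_inj)

lemma sum_real_lessThan: "(\<Sum>i<k. real i) = real k * (real k - 1) / 2"
  by (induction k) (auto simp: field_simps)

lemma sum_H:
  assumes w: "sorted_wrt (\<ge>) lam"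
  shows "(\<Sum>x\<in>H lam. real x) = real (sum_list lam) + real (length lam) * (real (length lam) - 1) / 2"
proof -
  let ?k = "length lam"
  have "(\<Sum>x\<in>H lam. real x) = (\<Sum>i<?k. real (beta lam i))"
    unfolding H_beta by (simp add: sum.reindex beta_inj[OF w])
  also have "\<dots> = (\<Sum>i<?k. real (lam ! i)) + (\<Sum>i<?k. real (?k - Suc i))"
    unfolding beta_def sum.distrib[symmetric] by (rule sum.cong) (auto simp: of_nat_diff)
  also have "(\<Sum>i<?k. real (?k - Suc i)) = (\<Sum>i<?k. real i)"
    by (rule sum.nat_diff_reindex)
  also have "(\<Sum>i<?k. real (lam ! i)) = real (sum_list lam)"
    by (simp add: sum_list_sum_nth atLeast0LessThan)
  finally show ?thesis by (simp add: sum_real_lessThan)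
qed

lemma beta_rm:
  assumes "corner lam i" "j < length lam"
  shows "beta (rm lam i) j = (if j = i then beta lam i - 1 else beta lam j)"
  using assms unfolding beta_def corner_def by (auto simp: rm_nth)

lemma H_rm:
  assumes w: "sorted_wrt (\<ge>) lam" and ci: "corner lam i"
  shows "H (rm lam i) = insert (beta lam i - 1) (H lam - {beta lam i})"
proof -
  have i: "i < length lam" using ci unfolding corner_def by auto
  have "H (rm lam i) = (\<lambda>j. if j = i then beta lam i - 1 else beta lam j) ` {..<length lam}"
    unfolding H_beta using beta_rm[OF ci] by simp
  also have "\<dots> = insert (beta lam i - 1) (beta lam ` ({..<length lam} - {i}))"
    using i by auto
  also have "beta lam ` ({..<length lam} - {i}) = H lam - {beta lam i}"
    unfolding H_beta using inj_on_image_set_diff[OF beta_inj[OF w], of "{..<length lam}" "{i}"] i by auto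
  finally show ?thesis .
qed

lemma corner_beta:
  assumes w: "sorted_wrt (\<ge>) lam" and ci: "corner lam i"
  shows "1 \<le> beta lam i" "beta lam i - 1 \<notin> H lam"
proof -
  have i: "i < length lam" "0 < lam ! i" using ci unfolding corner_def by auto
  then show "1 \<le> beta lam i" unfolding beta_def by auto
  show "beta lam i - 1 \<notin> H lam"
  proof
    assume "beta lam i - 1 \<in> H lam"
    then obtain j where j: "j < length lam" "beta lam j = beta lam i - 1" unfolding H_beta by auto
    show False
    proof (cases "j \<le> i")
      case True
      then have "beta lam i \<le> beta lam j"
        using beta_strict[OF w, of j i] i by (cases "j = i") auto
      then show False using j \<open>1 \<le> beta lam i\<close> by auto
    next
      case False
      then have "Suc i < length lam" "lam ! Suc i < lam ! i" using ci j unfolding corner_def by auto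
      moreover have "lam ! j \<le> lam ! Suc i" using wdec_nth[OF w, of "Suc i" j] False j by auto
      ultimately show False using j False unfolding beta_def by auto
    qed
  qed
qed

lemma noncorner_beta:
  assumes w: "sorted_wrt (\<ge>) lam" and i: "i < length lam" and nc: "\<not> corner lam i"
  shows "beta lam i = 0 \<or> (1 \<le> beta lam i \<and> beta lam i - 1 \<in> H lam)"
proof (cases "Suc i = length lam")
  case True
  then have "lam ! i = 0" using nc i unfolding corner_def by auto
  then show ?thesis using True unfolding beta_def by auto
next
  case False
  then have si: "Suc i < length lam" using i by auto
  have "lam ! Suc i \<le> lam ! i" using wdec_nth[OF w, of i "Suc i"] si by auto
  then have "lam ! Suc i = lam ! i" using nc i False unfolding corner_def by auto
  then have "beta lam (Suc i) = beta lam i - 1" "1 \<le> beta lam i" using si unfolding beta_def by auto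
  then show ?thesis using si unfolding H_beta by (metis imageI lessThan_iff)
qed

lemma term_zero:
  assumes w: "sorted_wrt (\<ge>) lam" and i: "i < length lam" and nc: "\<not> corner lam i"
  shows "real (beta lam i) * dd (H lam) (beta lam i) = 0"
proof -
  have bi: "beta lam i \<in> H lam" using i unfolding H_beta by auto
  show ?thesis using noncorner_beta[OF w i nc] dd_zero[OF finite_H bi] by auto
qed

lemma zero_SYT:
  assumes "\<forall>i<length lam. lam ! i = 0"
  shows "num_SYT lam = 1"
proof -
  have c: "cells lam = {}" using assms unfolding cells_def by auto
  have s: "sum_list lam = 0" using assms by (simp add: sum_list_sum_nth)
  have "SYT lam = {\<lambda>_. 0}" unfolding SYT_def c s by (auto simp: bij_betw_def)
  then show ?thesis unfolding num_SYT_def by simp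
qed

lemma zero_H:
  assumes "\<forall>i<length lam. lam ! i = 0"
  shows "H lam = {..<length lam}"
proof
  show "H lam \<subseteq> {..<length lam}" unfolding H_beta beta_def using assms by auto
  show "{..<length lam} \<subseteq> H lam"
  proof
    fix x assume x: "x \<in> {..<length lam}"
    then have "beta lam (length lam - Suc x) = x" using assms unfolding beta_def by auto
    then show "x \<in> H lam" unfolding H_beta using x by (metis diff_Suc_less imageI lessThan_iff less_nat_zero_code not_gr_zero)
  qed
qed

lemma hook:
  "sorted_wrt (\<ge>) lam \<Longrightarrow> sum_list lam = n \<Longrightarrow>
   real (num_SYT lam) * (\<Prod>x\<in>H lam. fact x) = fact n * Dl (H lam)"
proof (induction n arbitrary: lam)
  case 0
  then have z: "\<forall>i<length lam. lam ! i = 0"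
    by (metis elem_le_sum_list le_zero_eq)
  show ?case unfolding zero_SYT[OF z] zero_H[OF z] Dl_lessThan by simp
next
  case (Suc n)
  note w = Suc.prems(1)
  let ?H = "H lam"
  let ?PF = "\<Prod>x\<in>?H. (fact x :: real)"
  let ?Q = "Dl ?H / ?PF"
  have PFpos: "?PF > 0" by (rule prod_pos) auto
  have tm: "real (if corner lam i then num_SYT (rm lam i) else 0)
      = fact n * ?Q * (real (beta lam i) * dd ?H (beta lam i))" if i: "i < length lam" for i
  proof (cases "corner lam i")
    case True
    let ?H' = "insert (beta lam i - 1) (?H - {beta lam i})"
    have IH: "real (num_SYT (rm lam i)) * (\<Prod>x\<in>?H'. fact x) = fact n * Dl ?H'"
      using Suc.IH[OF wdec_rm[OF w True]] sum_rm[OF True] Suc.prems H_rm[OF w True] by simp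
    have bi: "beta lam i \<in> ?H" using i unfolding H_beta by auto
    have R: "Dl ?H' * ?PF = real (beta lam i) * dd ?H (beta lam i) * Dl ?H * (\<Prod>x\<in>?H'. fact x)"
      using ratio[OF finite_H bi corner_beta[OF w True]] .
    have PF'pos: "(\<Prod>x\<in>?H'. (fact x :: real)) > 0" by (rule prod_pos) auto
    have "real (num_SYT (rm lam i)) = fact n * Dl ?H' / (\<Prod>x\<in>?H'. fact x)"
      using IH PF'pos by (simp add: field_simps)
    also have "\<dots> = fact n * ?Q * (real (beta lam i) * dd ?H (beta lam i))"
      using R PF'pos PFpos by (simp add: field_simps)
    finally show ?thesis using True by simp
  next
    case False
    then show ?thesis using term_zero[OF w i False] by simp
  qed
  have "real (num_SYT lam) = (\<Sum>i<length lam. real (if corner lam i then num_SYT (rm lam i) else 0))"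
    using branching[OF w Suc.prems(2)] by simp
  also have "\<dots> = (\<Sum>i<length lam. fact n * ?Q * (real (beta lam i) * dd ?H (beta lam i)))"
    by (rule sum.cong) (auto simp: tm)
  also have "\<dots> = fact n * ?Q * (\<Sum>i<length lam. real (beta lam i) * dd ?H (beta lam i))"
    by (simp add: sum_distrib_left)
  also have "(\<Sum>i<length lam. real (beta lam i) * dd ?H (beta lam i)) = (\<Sum>x\<in>?H. real x * dd ?H x)"
    unfolding H_beta by (simp add: sum.reindex beta_inj[OF w])
  also have "\<dots> = real (Suc n)"
    using s1_formula[OF finite_H, of lam] sum_H[OF w] card_H[OF w] Suc.prems by simp
  finally have "real (num_SYT lam) = fact n * ?Q * real (Suc n)" .
  then show ?case using PFpos by (simp add: field_simps)
qed



lemma Od_form: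
  assumes "x = 2 ^ k * u" "odd u"
  shows "Od x = (if u mod 4 = 1 then 1 else -1)"
proof -
  have "multiplicity (2::nat) x = k"
    by (rule multiplicity_decomposeI[OF assms(1)]) (use assms(2) in auto)
  then have "x div 2 ^ multiplicity 2 x = u" using assms(1) by simp
  then show ?thesis unfolding Od_def by simp
qed

lemma decomp2:
  fixes a :: nat assumes "a > 0"
  obtains k u where "a = 2 ^ k * u" "odd u"
proof -
  obtain y where "a = 2 ^ multiplicity 2 a * y" "\<not> 2 dvd y"
    using multiplicity_decompose'[of a 2] assms by auto
  then show ?thesis using that by auto
qed

lemma Od_mult:
  fixes a b :: nat assumes "a > 0" "b > 0"
  shows "Od (a * b) = Od a * Od b"
proof -
  obtain k u where a: "a = 2 ^ k * u" "odd u" using decomp2[OF assms(1)] by blast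
  obtain l p where b: "b = 2 ^ l * p" "odd p" using decomp2[OF assms(2)] by blast
  have ab: "a * b = 2 ^ (k + l) * (u * p)" using a b by (simp add: power_add ac_simps)
  have op: "odd (u * p)" using a b by simp
  have o4: "u mod 4 = 1 \<or> u mod 4 = 3" using a(2) by presburger
  have p4: "p mod 4 = 1 \<or> p mod 4 = 3" using b(2) by presburger
  have "(u * p) mod 4 = ((u mod 4) * (p mod 4)) mod 4" by (simp add: mod_mult_eq)
  then show ?thesis unfolding Od_form[OF ab op] Od_form[OF a] Od_form[OF b] using o4 p4 by auto
qed

lemma Od_sq: "Od a * Od a = 1"
  unfolding Od_def by auto

lemma Od_double: "a > 0 \<Longrightarrow> Od (2 * a) = Od a"
  using Od_mult[of 2 a] Od_form[of 2 1 1] by simp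

lemma Od_odd: "odd a \<Longrightarrow> Od a = (if a mod 4 = 1 then 1 else -1)"
  using Od_form[of a 0 a] by simp

lemma Od_prod:
  "finite A \<Longrightarrow> (\<forall>t\<in>A. f t > 0) \<Longrightarrow> Od (\<Prod>t\<in>A. f t) = (\<Prod>t\<in>A. Od (f t))"
proof (induction A rule: finite_induct)
  case empty then show ?case using Od_odd[of 1] by simp
next
  case (insert a A)
  then show ?case by (simp add: Od_mult prod_pos)
qed

definition W :: "nat \<Rightarrow> nat \<Rightarrow> int" where
  "W M L = (\<Prod>t\<in>{t\<in>{M<..M+L}. odd t}. Od t)"

lemma W4: "W M 4 = -1"
proof (cases "even M")
  case True
  then have s: "{t\<in>{M<..M+4}. odd t} = {M+1, M+3}" by (auto, presburger+)
  have "(M + 1) mod 4 = 1 \<longleftrightarrow> (M + 3) mod 4 \<noteq> 1" using True by presburger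
  then show ?thesis unfolding W_def s using True by (auto simp: Od_odd)
next
  case False
  then have s: "{t\<in>{M<..M+4}. odd t} = {M+2, M+4}" by (auto, presburger+)
  have "(M + 2) mod 4 = 1 \<longleftrightarrow> (M + 4) mod 4 \<noteq> 1" using False by presburger
  then show ?thesis unfolding W_def s using False by (auto simp: Od_odd)
qed

lemma W_double: "W M (2 * L) = W M L * W (M + L) L"
proof -
  have "{t\<in>{M<..M+2*L}. odd t} = {t\<in>{M<..M+L}. odd t} \<union> {t\<in>{M+L<..M+L+L}. odd t}" by auto
  moreover have "{t\<in>{M<..M+L}. odd t} \<inter> {t\<in>{M+L<..M+L+L}. odd t} = {}" by auto
  ultimately show ?thesis unfolding W_def by (simp add: prod.union_disjoint)
qed

lemma W_pow: "R \<ge> 3 \<Longrightarrow> W M (2 ^ R) = 1"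
proof (induction R arbitrary: M rule: dec_induct)
  case base
  have "W M (2 * 4) = W M 4 * W (M + 4) 4" by (rule W_double)
  then show ?case by (simp add: W4)
next
  case (step R)
  then show ?case using W_double[of M "2 ^ R"] by simp
qed

definition G :: "nat \<Rightarrow> nat \<Rightarrow> int" where
  "G M L = Od (\<Prod>{M<..M+L})"

lemma G_double: "G M (2 * L) = W M (2 * L) * G (M div 2) L"
proof -
  let ?A = "{M<..M+2*L}"
  have fin: "finite ?A" by simp
  have G1: "G M (2 * L) = (\<Prod>t\<in>?A. Od t)" unfolding G_def
    using Od_prod[OF fin, of id] by simp
  have G2: "G (M div 2) L = (\<Prod>s\<in>{M div 2<..M div 2 + L}. Od s)" unfolding G_def
    using Od_prod[of "{M div 2<..M div 2 + L}" id] by simp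
  have split: "?A = {t\<in>?A. odd t} \<union> {t\<in>?A. even t}" by auto
  have "(\<Prod>t\<in>?A. Od t) = (\<Prod>t\<in>{t\<in>?A. odd t}. Od t) * (\<Prod>t\<in>{t\<in>?A. even t}. Od t)"
    by (subst split, rule prod.union_disjoint) auto
  moreover have ev: "{t\<in>?A. even t} = (\<lambda>s. 2 * s) ` {M div 2<..M div 2 + L}"
  proof
    show "{t\<in>?A. even t} \<subseteq> (\<lambda>s. 2 * s) ` {M div 2<..M div 2 + L}"
    proof
      fix t assume t: "t \<in> {t\<in>?A. even t}"
      then obtain s where "t = 2 * s" by auto
      then show "t \<in> (\<lambda>s. 2 * s) ` {M div 2<..M div 2 + L}" using t by (auto intro!: imageI)
    qed
  qed auto
  moreover have "(\<Prod>t\<in>(\<lambda>s. 2 * s) ` {M div 2<..M div 2 + L}. Od t) = (\<Prod>s\<in>{M div 2<..M div 2 + L}. Od s)"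
    by (subst prod.reindex) (auto simp: inj_on_def Od_double)
  ultimately show ?thesis unfolding G1 G2 W_def by simp
qed

lemma G_main:
  "R \<ge> 2 \<Longrightarrow> 2 ^ R \<le> N \<Longrightarrow> N < 2 ^ (R + 1) \<Longrightarrow>
   G (N - 2 ^ R) (2 ^ R) = (if (N div 2 ^ (R - 1)) mod 2 = 1 then 1 else -1)"
proof (induction R arbitrary: N rule: dec_induct)
  case base
  then have "N = 4 \<or> N = 5 \<or> N = 6 \<or> N = 7" by auto
  moreover have "{0<..4::nat} = {1,2,3,4}" "{1<..5::nat} = {2,3,4,5}" "{2<..6::nat} = {3,4,5,6}"
     "{3<..7::nat} = {4,5,6,7}" by auto
  moreover have "Od 24 = -1" using Od_form[of 24 3 3] by simp
  moreover have "Od 120 = -1" using Od_form[of 120 3 15] by simp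
  moreover have "Od 360 = 1" using Od_form[of 360 3 45] by simp
  moreover have "Od 840 = 1" using Od_form[of 840 3 105] by simp
  ultimately show ?case unfolding G_def by auto
next
  case (step R)
  let ?M = "N - 2 ^ (Suc R)"
  have "G ?M (2 ^ Suc R) = W ?M (2 ^ Suc R) * G (?M div 2) (2 ^ R)"
    using G_double[of ?M "2 ^ R"] by simp
  also have "W ?M (2 ^ Suc R) = 1" using W_pow[of "Suc R"] step by simp
  also have "?M div 2 = N div 2 - 2 ^ R"
  proof -
    have "N = 2 * 2 ^ R + ?M" using step by simp
    moreover have "(2 * a + b) div 2 = a + b div (2::nat)" for a b by presburger
    ultimately have "N div 2 = 2 ^ R + ?M div 2" by metis
    then show ?thesis by simp
  qed
  also have "G (N div 2 - 2 ^ R) (2 ^ R) = (if (N div 2 div 2 ^ (R - 1)) mod 2 = 1 then 1 else -1)"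
    using step by (intro step.IH) auto
  also have "N div 2 div 2 ^ (R - 1) = N div 2 ^ (Suc R - 1)"
    using step by (simp add: div_mult2_eq[symmetric] power_Suc[symmetric] del: power_Suc)
  finally show ?case by simp
qed



lemma fact_split_nat: "(fact (M + L) :: nat) = fact M * \<Prod>{M<..M+L}"
proof (induction L)
  case 0 then show ?case by simp
next
  case (Suc L)
  have "{M<..M + Suc L} = insert (Suc (M + L)) {M<..M+L}" by auto
  then show ?case using Suc by (simp add: ac_simps)
qed

lemma Od_fact_pair:
  assumes "R \<ge> 2" "2 ^ R \<le> N" "N < 2 ^ (R + 1)"
  shows "Od (fact N) * Od (fact (N - 2 ^ R)) = (if (N div 2 ^ (R - 1)) mod 2 = 1 then 1 else -1)"
proof -
  let ?M = "N - 2 ^ R"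
  have N: "N = ?M + 2 ^ R" using assms by simp
  have pos: "\<Prod>{?M<..?M + 2 ^ R} > 0" by (rule prod_pos) auto
  have "Od (fact N) = Od (fact ?M) * G ?M (2 ^ R)"
    unfolding G_def by (subst N, subst fact_split_nat) (rule Od_mult, auto simp: pos)
  then have "Od (fact N) * Od (fact ?M) = G ?M (2 ^ R) * (Od (fact ?M) * Od (fact ?M))" by simp
  then show ?thesis using G_main[OF assms] Od_sq by simp
qed

lemma s2_eq:
  assumes "R \<ge> 1" "2 ^ R \<le> N" "N < 2 ^ (R + 1)"
  shows "s2 N = 1 + (N div 2 ^ (R - 1)) mod 2"
proof -
  have g: "(GREATEST k. 2 ^ k \<le> N) = R"
  proof (rule Greatest_equality)
    show "2 ^ R \<le> N" by fact
    fix y assume y: "2 ^ y \<le> (N::nat)"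
    show "y \<le> R"
    proof (rule ccontr)
      assume "\<not> y \<le> R"
      then have "(2::nat) ^ (R + 1) \<le> 2 ^ y" by (intro power_increasing) auto
      then show False using y assms by simp
    qed
  qed
  have "N div 2 ^ R = 1"
    using assms by (simp add: div_nat_eqI)
  then show ?thesis unfolding s2_def g Let_def by simp
qed

lemma sign_s2:
  assumes "R \<ge> 2" "2 ^ R \<le> N" "N < 2 ^ (R + 1)"
  shows "(-1::real) ^ s2 N = real_of_int (Od (fact N) * Od (fact (N - 2 ^ R)))"
proof -
  have s: "s2 N = 1 + (N div 2 ^ (R - 1)) mod 2" using s2_eq[of R N] assms by simp
  show ?thesis unfolding Od_fact_pair[OF assms] s
    by (cases "odd (N div 2 ^ (R - 1))") (auto simp: mod_2_eq_odd)
qed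

lemma H_le_sum:
  assumes p: "is_partition lam" and h: "h \<in> H lam"
  shows "h \<le> sum_list lam"
proof -
  obtain i where i: "i < length lam" "h = beta lam i" using h unfolding H_beta by auto
  have "(\<Sum>j<length lam. if j = i then lam ! i else 1) \<le> (\<Sum>j<length lam. lam ! j)"
  proof (rule sum_mono)
    fix j assume "j \<in> {..<length lam}"
    then have "lam ! j \<in> set lam" by simp
    then show "(if j = i then lam ! i else 1) \<le> lam ! j" using p unfolding is_partition_def by auto
  qed
  moreover have "(\<Sum>j<length lam. if j = i then lam ! i else 1) = lam ! i + (length lam - 1)"
  proof -
    have "(\<Sum>j<length lam. if j = i then lam ! i else 1) = (\<Sum>j\<in>insert i ({..<length lam} - {i}). if j = i then lam ! i else 1)"
      using i by (simp add: insert_absorb)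
    also have "\<dots> = lam ! i + (\<Sum>j\<in>{..<length lam} - {i}. if j = i then lam ! i else 1)"
      by (subst sum.insert) auto
    also have "(\<Sum>j\<in>{..<length lam} - {i}. if j = i then lam ! i else 1) = (\<Sum>j\<in>{..<length lam} - {i}. 1)"
      by (rule sum.cong) auto
    also have "\<dots> = length lam - 1" using i by simp
    finally show ?thesis .
  qed
  ultimately show ?thesis using i unfolding beta_def by (simp add: sum_list_sum_nth atLeast0LessThan)
qed

lemma pad_cells: "cells (mu @ replicate r 0) = cells mu"
  unfolding cells_def by (auto simp: nth_append split: if_splits)

lemma pad_num: "num_SYT (mu @ replicate r 0) = num_SYT mu"
  unfolding num_SYT_def SYT_def pad_cells by (simp add: sum_list_replicate)

lemma rep0_sorted: "sorted_wrt (\<ge>) (replicate r (0::nat))"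
  by (induction r) auto

lemma pad_wdec: "is_partition mu \<Longrightarrow> sorted_wrt (\<ge>) (mu @ replicate r 0)"
  unfolding is_partition_def using rep0_sorted by (auto simp: sorted_wrt_append)

lemma pad_H: "H (mu @ replicate r 0) = shiftset (H mu) r"
proof -
  let ?k = "length mu"
  have "H (mu @ replicate r 0) = beta (mu @ replicate r 0) ` ({..<?k} \<union> {?k..<?k + r})"
    unfolding H_beta by (simp add: ivl_disj_un)
  also have "\<dots> = beta (mu @ replicate r 0) ` {..<?k} \<union> beta (mu @ replicate r 0) ` {?k..<?k + r}"
    by (rule image_Un)
  also have "beta (mu @ replicate r 0) ` {..<?k} = (\<lambda>x. x + r) ` H mu"
    unfolding H_beta image_image by (rule image_cong) (auto simp: beta_def nth_append)
  also have "beta (mu @ replicate r 0) ` {?k..<?k + r} = {0..<r}"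
  proof
    show "beta (mu @ replicate r 0) ` {?k..<?k + r} \<subseteq> {0..<r}"
      by (auto simp: beta_def nth_append)
    show "{0..<r} \<subseteq> beta (mu @ replicate r 0) ` {?k..<?k + r}"
    proof
      fix x assume x: "x \<in> {0..<r}"
      have "beta (mu @ replicate r 0) (?k + r - 1 - x) = x" using x by (auto simp: beta_def nth_append)
      moreover have "?k + r - 1 - x \<in> {?k..<?k + r}" using x by auto
      ultimately show "x \<in> beta (mu @ replicate r 0) ` {?k..<?k + r}" by (metis imageI)
    qed
  qed
  finally show ?thesis unfolding shiftset_def .
qed



theorem proposition3p3:
  fixes R m :: nat and lam mu :: "nat list" and h :: nat
  assumes "m < 2 ^ R"
    and "2 ^ R + m > 3"
    and "partition_of mu m"
    and "is_parent R lam mu"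
    and "affected_hook R lam mu h"
  shows "real_of_int (Od (num_SYT lam))
       = (-1) ^ (s2 (2 ^ R + m) + s2 h) * eta_sign R lam h * real_of_int (Od (num_SYT mu))"
proof -
  let ?n = "2 ^ R + m"
  let ?h' = "h - 2 ^ R"
  let ?A = "H lam - {h}"
  have smu: "sum_list mu = m" and pmu: "is_partition mu" using assms(3) unfolding partition_of_def by auto
  have plam: "is_partition lam" and slam: "sum_list lam = ?n"
    using assms(4) smu unfolding is_parent_def partition_of_def by auto
  have wl: "sorted_wrt (\<ge>) lam" using plam unfolding is_partition_def by auto
  have hH: "h \<in> H lam" and hR: "h \<ge> 2 ^ R" and h'H: "?h' \<notin> H lam"
    using assms(5) unfolding affected_hook_def by auto
  obtain r where r: "(H lam \<union> {?h'}) - {h} = shiftset (H mu) r"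
    using assms(5) unfolding affected_hook_def by auto
  have R2: "R \<ge> 2"
  proof (rule ccontr)
    assume "\<not> R \<ge> 2"
    then have "R = 0 \<or> R = 1" by auto
    then show False using assms(1,2) by auto
  qed
  have hn: "h \<le> ?n" using H_le_sum[OF plam hH] slam by simp
  have nlt: "?n < 2 ^ (R + 1)" using assms(1) by simp
  have fA: "finite ?A" using finite_H by simp
  have hA: "h \<notin> ?A" by simp
  have h'A: "?h' \<notin> ?A" using h'H by simp
  have Hl: "H lam = insert h ?A" using hH by auto
  have Hm: "H (mu @ replicate r 0) = insert ?h' ?A"
  proof -
    have "(0::nat) < 2 ^ R" by simp
    then have "?h' \<noteq> h" using hR by linarith
    then show ?thesis unfolding pad_H r[symmetric] using hH by auto
  qed
  have E1: "real (num_SYT lam) * (fact h * (\<Prod>x\<in>?A. fact x)) = fact ?n * (Dl ?A * (\<Prod>y\<in>?A. \<bar>real h - real y\<bar>))"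
    using hook[OF wl slam] Dl_insert[OF fA hA] prod.insert[OF fA hA, of fact] Hl by (metis)
  have E2: "real (num_SYT mu) * (fact ?h' * (\<Prod>x\<in>?A. fact x)) = fact m * (Dl ?A * (\<Prod>y\<in>?A. \<bar>real ?h' - real y\<bar>))"
    using hook[OF pad_wdec[OF pmu], of r m] pad_num[of mu r] Dl_insert[OF fA h'A] prod.insert[OF fA h'A, of "fact :: nat \<Rightarrow> real"] Hm smu
    by (simp add: sum_list_replicate)
  define P1 where "P1 = (\<Prod>y\<in>?A. nat \<bar>int h - int y\<bar>)"
  define P2 where "P2 = (\<Prod>y\<in>?A. nat \<bar>int ?h' - int y\<bar>)"
  have rP1: "real P1 = (\<Prod>y\<in>?A. \<bar>real h - real y\<bar>)" unfolding P1_def of_nat_prod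
    by (rule prod.cong) auto
  have rP2: "real P2 = (\<Prod>y\<in>?A. \<bar>real ?h' - real y\<bar>)" unfolding P2_def of_nat_prod
    by (rule prod.cong) auto
  have P1pos: "P1 > 0" unfolding P1_def by (rule prod_pos) auto
  have P2pos: "P2 > 0" unfolding P2_def using h'A by (intro prod_pos) auto
  let ?PA = "(\<Prod>x\<in>?A. fact x) :: real"
  have PApos: "?PA > 0" by (rule prod_pos) auto
  have DApos: "Dl ?A > 0" by (rule Dl_pos[OF fA])
  have L1: "real (num_SYT lam) * fact h * fact m * real P2 * ?PA = fact ?n * Dl ?A * real P1 * fact m * real P2"
    using E1 unfolding rP1[symmetric] by (simp add: algebra_simps)
  have L2: "real (num_SYT mu) * fact ?h' * fact ?n * real P1 * ?PA = fact m * Dl ?A * real P2 * fact ?n * real P1"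
    using E2 unfolding rP2[symmetric] by (simp add: algebra_simps)
  have L3: "fact ?n * Dl ?A * real P1 * fact m * real P2 = (fact m * Dl ?A * real P2 * fact ?n * real P1 :: real)"
    by (simp only: mult.assoc mult.commute mult.left_commute)
  have "real (num_SYT lam) * fact h * fact m * real P2 * ?PA = real (num_SYT mu) * fact ?h' * fact ?n * real P1 * ?PA"
    unfolding L1 L2 L3 ..
  then have "real (num_SYT lam) * fact h * fact m * real P2 = real (num_SYT mu) * fact ?h' * fact ?n * real P1"
    using PApos by simp
  then have EQ: "num_SYT lam * fact h * fact m * P2 = num_SYT mu * fact ?h' * fact ?n * P1"
    by (metis (mono_tags) of_nat_eq_iff of_nat_mult of_nat_fact)
  have nl: "num_SYT lam > 0"
  proof -
    have "fact ?n * (Dl ?A * real P1) > 0" using DApos P1pos by simp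
    moreover have "real (num_SYT lam) * (fact h * ?PA) = fact ?n * (Dl ?A * real P1)" using E1 rP1 by simp
    ultimately have "real (num_SYT lam) * (fact h * ?PA) > 0" by simp
    then show ?thesis by (cases "num_SYT lam = 0") auto
  qed
  have nm: "num_SYT mu > 0"
  proof -
    have "fact m * (Dl ?A * real P2) > 0" using DApos P2pos by simp
    moreover have "real (num_SYT mu) * (fact ?h' * ?PA) = fact m * (Dl ?A * real P2)" using E2 rP2 by simp
    ultimately have "real (num_SYT mu) * (fact ?h' * ?PA) > 0" by simp
    then show ?thesis by (cases "num_SYT mu = 0") auto
  qed
  have fp: "\<And>k. (fact k :: nat) > 0" by simp
  have OdEQ: "Od (num_SYT lam) * Od (fact h) * Od (fact m) * Od P2 = Od (num_SYT mu) * Od (fact ?h') * Od (fact ?n) * Od P1"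
    using arg_cong[OF EQ, of Od] nl nm P1pos P2pos by (simp add: Od_mult fp)
  have sq: "\<And>a. Od a * Od a = 1" by (rule Od_sq)
  have Olam: "Od (num_SYT lam) = Od (num_SYT mu) * (Od (fact ?h') * Od (fact h)) * (Od (fact ?n) * Od (fact m)) * (Od P1 * Od P2)"
  proof -
    have "Od (num_SYT lam) = Od (num_SYT lam) * (Od (fact h) * Od (fact h)) * (Od (fact m) * Od (fact m)) * (Od P2 * Od P2)"
      using sq by simp
    also have "\<dots> = (Od (num_SYT lam) * Od (fact h) * Od (fact m) * Od P2) * (Od (fact h) * Od (fact m) * Od P2)"
      by (simp add: ac_simps)
    also have "\<dots> = Od (num_SYT mu) * Od (fact ?h') * Od (fact ?n) * Od P1 * (Od (fact h) * Od (fact m) * Od P2)"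
      unfolding OdEQ ..
    finally show ?thesis by (simp add: ac_simps)
  qed
  have sn: "(-1::real) ^ s2 ?n = real_of_int (Od (fact ?n) * Od (fact m))"
    using sign_s2[OF R2 _ nlt] by simp
  have sh: "(-1::real) ^ s2 h = real_of_int (Od (fact h) * Od (fact ?h'))"
    using sign_s2[OF R2 hR] hn nlt by simp
  have eta: "eta_sign R lam h = real_of_int (Od P1 * Od P2)"
  proof -
    have "eta_sign R lam h = (\<Prod>x\<in>?A. real_of_int (Od (nat \<bar>int h - int x\<bar>) * Od (nat \<bar>int ?h' - int x\<bar>)))"
      unfolding eta_sign_def
    proof (rule prod.cong[OF refl])
      fix x assume "x \<in> ?A"
      have e: "int h - 2 ^ R - int x = int ?h' - int x" using hR by (simp add: of_nat_diff)
      have "\<And>a b. Od a * Od a = 1" by (rule Od_sq)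
      then have "\<And>a. Od a = 1 \<or> Od a = -1" unfolding Od_def by auto
      then show "real_of_int (Od (nat \<bar>int h - int x\<bar>)) / real_of_int (Od (nat \<bar>int h - 2 ^ R - int x\<bar>))
           = real_of_int (Od (nat \<bar>int h - int x\<bar>) * Od (nat \<bar>int ?h' - int x\<bar>))"
        unfolding e by (metis (no_types, opaque_lifting) divide_minus_right div_by_1 mult_1_right mult_minus_right of_int_1 of_int_minus of_int_mult)
    qed
    also have "\<dots> = real_of_int (Od P1 * Od P2)"
    proof -
      have I1: "Od P1 = (\<Prod>x\<in>?A. Od (nat \<bar>int h - int x\<bar>))"
        unfolding P1_def using fA by (subst Od_prod) auto
      have I2: "Od P2 = (\<Prod>x\<in>?A. Od (nat \<bar>int ?h' - int x\<bar>))"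
        unfolding P2_def using fA h'A by (subst Od_prod) auto
      show ?thesis unfolding I1 I2 of_int_prod[symmetric] prod.distrib[symmetric] ..
    qed
    finally show ?thesis .
  qed
  show ?thesis
    unfolding Olam power_add sn sh eta by (simp add: ac_simps)
qed


end
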